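(* Let $J=JCK(Z,\delta)$. Then $\dim_{\mathbb F}\mathrm{Inder}(J)_{\bar0}=4\dim_{\mathbb F}Z=\dim_{\mathbb F}J_{\bar0}$ (dimensions as cardinals).
   Context: Let $\mathbb F$ be a field of characteristic $\neq 2$, $Z$ a unital commutative associative $\mathbb F$-algebra, and $\delta$ a derivation of $Z$ such that $Z\delta(Z)=Z$ (the $\mathbb F$-span of all products $f\delta(g)$, $f,g\in Z$, is $Z$). The Cheng-Kac Jordan superalgebra $J=JCK(Z,\delta)=J_{\bar0}\oplus J_{\bar1}$ is defined as follows: $J_{\bar0}=Z1\oplus Zw_1\oplus Zw_2\oplus Zw_3$ and $J_{\bar1}=Zx\oplus Zx_1\oplus Zx_2\oplus Zx_3$ are free $Z$-modules of rank 4; $J_{\bar0}$ is the $Z$-algebra $(\mathbb F1\oplus\mathbb Fw_1\oplus\mathbb Fw_2\oplus\mathbb Fw_3)\otimes_{\mathbb F}Z$ with $1$ the identity, $w_1^2=w_2^2=1$, $w_3^2=-1$, $w_iw_j=0$ for $i\ne j$. For $f,g\in Z$ and $i,j\in\{1,2,3\}$ the remaining products are: $f(gx)=(fg)x$, $f(gx_j)=(fg)x_j$, $(fw_i)(gx)=(\delta(f)g)x_i$, $(fw_i)(gx_j)=-(fg)x_{i\times j}$, $(fx)(gx)=\delta(f)g-f\delta(g)$, $(fx)(gx_j)=-(fg)w_j$, $(fx_i)(gx)=(fg)w_i$, $(fx_i)(gx_j)=0$, extended by supercommutativity ($ab=(-1)^{|a||b|}ba$), where $x_{1\times2}=-x_{2\times1}=x_3$,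 $x_{1\times3}=-x_{3\times1}=x_2$, $x_{3\times2}=-x_{2\times3}=x_1$, $x_{i\times i}=0$. $D(a,b)$ is the map $c\mapsto a(bc)-(-1)^{|a||b|}b(ac)$, and $\mathrm{Inder}(J)$ is the span of all $D(a,b)$, $a,b\in J$ homogeneous. *)

theory Defs
  imports Main "HOL.Vector_Spaces" "HOL-Library.Function_Algebras" "HOL-Library.Equipollence"
begin

text \<open>Basis of the Cheng-Kac superalgebra JCK(Z,delta) as a free Z-module:
  J_0 = Z1 + Zw1 + Zw2 + Zw3, J_1 = Zx + Zx1 + Zx2 + Zx3.
  An element of J is the function assigning to each basis vector its Z-coefficient.\<close>

datatype idx = E | W1 | W2 | W3 | X | X1 | X2 | X3

definition allidx :: "idx list" where
  "allidx = [E, W1, W2, W3, X, X1, X2, X3]"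

definition single :: "idx \<Rightarrow> 'z::zero \<Rightarrow> idx \<Rightarrow> 'z" where
  "single c z = (\<lambda>k. if k = c then z else 0)"

text \<open>Product (f e_k)(g e_l) of basis elements with coefficients, following the
  multiplication table (with supercommutativity filled in).  d is the derivation.\<close>

fun bp :: "('z::comm_ring_1 \<Rightarrow> 'z) \<Rightarrow> idx \<Rightarrow> 'z \<Rightarrow> idx \<Rightarrow> 'z \<Rightarrow> idx \<Rightarrow> 'z" where
  "bp d E f l g = single l (f * g)"
| "bp d k f E g = single k (f * g)"
| "bp d W1 f W1 g = single E (f * g)"
| "bp d W2 f W2 g = single E (f * g)"
| "bp d W3 f W3 g = single E (- (f * g))"
| "bp d W1 f X g = single X1 (d f * g)"
| "bp d W2 f X g = single X2 (d f * g)"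
| "bp d W3 f X g = single X3 (d f * g)"
| "bp d X f W1 g = single X1 (d g * f)"
| "bp d X f W2 g = single X2 (d g * f)"
| "bp d X f W3 g = single X3 (d g * f)"
| "bp d W1 f X2 g = single X3 (- (f * g))"
| "bp d W1 f X3 g = single X2 (- (f * g))"
| "bp d W2 f X1 g = single X3 (f * g)"
| "bp d W2 f X3 g = single X1 (f * g)"
| "bp d W3 f X1 g = single X2 (f * g)"
| "bp d W3 f X2 g = single X1 (- (f * g))"
| "bp d X2 f W1 g = single X3 (- (g * f))"
| "bp d X3 f W1 g = single X2 (- (g * f))"
| "bp d X1 f W2 g = single X3 (g * f)"
| "bp d X3 f W2 g = single X1 (g * f)"
| "bp d X1 f W3 g = single X2 (g * f)"
| "bp d X2 f W3 g = single X1 (- (g * f))"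
| "bp d X f X g = single E (d f * g - f * d g)"
| "bp d X f X1 g = single W1 (- (f * g))"
| "bp d X f X2 g = single W2 (- (f * g))"
| "bp d X f X3 g = single W3 (- (f * g))"
| "bp d X1 f X g = single W1 (f * g)"
| "bp d X2 f X g = single W2 (f * g)"
| "bp d X3 f X g = single W3 (f * g)"
| "bp d k f l g = (\<lambda>_. 0)"

definition jmult :: "('z::comm_ring_1 \<Rightarrow> 'z) \<Rightarrow> (idx \<Rightarrow> 'z) \<Rightarrow> (idx \<Rightarrow> 'z) \<Rightarrow> (idx \<Rightarrow> 'z)" where
  "jmult d a b = (\<lambda>c. \<Sum>k\<leftarrow>allidx. \<Sum>l\<leftarrow>allidx. bp d k (a k) l (b l) c)"

definition even_idx :: "idx \<Rightarrow> bool" where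
  "even_idx k \<longleftrightarrow> k \<in> {E, W1, W2, W3}"

definition J0 :: "(idx \<Rightarrow> 'z::zero) set" where
  "J0 = {a. \<forall>k. \<not> even_idx k \<longrightarrow> a k = 0}"

definition J1 :: "(idx \<Rightarrow> 'z::zero) set" where
  "J1 = {a. \<forall>k. even_idx k \<longrightarrow> a k = 0}"

text \<open>Homogeneous of parity p (False = even, True = odd).\<close>
definition hom :: "bool \<Rightarrow> (idx \<Rightarrow> 'z::zero) \<Rightarrow> bool" where
  "hom p a \<longleftrightarrow> (if p then a \<in> J1 else a \<in> J0)"

definition Dmap :: "('z::comm_ring_1 \<Rightarrow> 'z) \<Rightarrow> bool \<Rightarrow> bool \<Rightarrow> (idx \<Rightarrow> 'z) \<Rightarrow> (idx \<Rightarrow> 'z)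
    \<Rightarrow> (idx \<Rightarrow> 'z) \<Rightarrow> (idx \<Rightarrow> 'z)" where
  "Dmap d p q a b = (\<lambda>c k. jmult d a (jmult d b c) k
      - (if p \<and> q then -1 else 1) * jmult d b (jmult d a c) k)"

definition jscale :: "('f \<Rightarrow> 'z \<Rightarrow> 'z) \<Rightarrow> 'f \<Rightarrow> (idx \<Rightarrow> 'z) \<Rightarrow> (idx \<Rightarrow> 'z)" where
  "jscale sc c a = (\<lambda>k. sc c (a k))"

definition mscale :: "('f \<Rightarrow> 'z \<Rightarrow> 'z) \<Rightarrow> 'f \<Rightarrow> ((idx \<Rightarrow> 'z) \<Rightarrow> (idx \<Rightarrow> 'z))
    \<Rightarrow> ((idx \<Rightarrow> 'z) \<Rightarrow> (idx \<Rightarrow> 'z))" where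
  "mscale sc c \<phi> = (\<lambda>a. jscale sc c (\<phi> a))"

definition Inder :: "('f::field \<Rightarrow> 'z::comm_ring_1 \<Rightarrow> 'z) \<Rightarrow> ('z \<Rightarrow> 'z)
    \<Rightarrow> ((idx \<Rightarrow> 'z) \<Rightarrow> (idx \<Rightarrow> 'z)) set" where
  "Inder sc d = module.span (mscale sc) {Dmap d p q a b | p q a b. hom p a \<and> hom q b}"

definition Inder0 :: "('f::field \<Rightarrow> 'z::comm_ring_1 \<Rightarrow> 'z) \<Rightarrow> ('z \<Rightarrow> 'z)
    \<Rightarrow> ((idx \<Rightarrow> 'z) \<Rightarrow> (idx \<Rightarrow> 'z)) set" where
  "Inder0 sc d = Inder sc d \<inter> {\<phi>. \<phi> ` J0 \<subseteq> J0 \<and> \<phi> ` J1 \<subseteq> J1}"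

definition basis_of :: "('f::field \<Rightarrow> 'v::ab_group_add \<Rightarrow> 'v) \<Rightarrow> 'v set \<Rightarrow> 'v set \<Rightarrow> bool" where
  "basis_of sc S B \<longleftrightarrow> \<not> module.dependent sc B \<and> module.span sc B = S"

end

theory Submission
  imports Defs
begin


definition jm :: "('z::comm_ring_1 \<Rightarrow> 'z) \<Rightarrow> (idx \<Rightarrow> 'z) \<Rightarrow> (idx \<Rightarrow> 'z) \<Rightarrow> (idx \<Rightarrow> 'z)" where
 "jm d a b = (\<lambda>k. case k of
   E \<Rightarrow> a E * b E + a W1 * b W1 + a W2 * b W2 - a W3 * b W3 + (d (a X) * b X - a X * d (b X))
 | W1 \<Rightarrow> a E * b W1 + a W1 * b E - a X * b X1 + a X1 * b X
 | W2 \<Rightarrow> a E * b W2 + a W2 * b E - a X * b X2 + a X2 * b X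
 | W3 \<Rightarrow> a E * b W3 + a W3 * b E - a X * b X3 + a X3 * b X
 | X \<Rightarrow> a E * b X + a X * b E
 | X1 \<Rightarrow> a E * b X1 + a X1 * b E + d (a W1) * b X + d (b W1) * a X + a W2 * b X3 - a W3 * b X2 + b W2 * a X3 - b W3 * a X2
 | X2 \<Rightarrow> a E * b X2 + a X2 * b E + d (a W2) * b X + d (b W2) * a X - a W1 * b X3 + a W3 * b X1 - b W1 * a X3 + b W3 * a X1
 | X3 \<Rightarrow> a E * b X3 + a X3 * b E + d (a W3) * b X + d (b W3) * a X - a W1 * b X2 + a W2 * b X1 - b W1 * a X2 + b W2 * a X1)"

lemma jmult_jm: "jmult d a b = jm d a b"
  apply (rule ext)
  subgoal for k
    by (cases k) (simp_all add: jmult_def jm_def allidx_def single_def algebra_simps)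
  done



locale ck =
  fixes scale :: "'f::field \<Rightarrow> 'z::comm_ring_1 \<Rightarrow> 'z" and \<delta> :: "'z \<Rightarrow> 'z"
  assumes char: "(2::'f) \<noteq> 0"
    and vs: "vector_space scale"
    and alg: "\<And>c a b. scale c (a * b) = scale c a * b"
    and lin: "Vector_Spaces.linear scale scale \<delta>"
    and leib: "\<And>a b. \<delta> (a * b) = a * \<delta> b + \<delta> a * b"
    and gen: "module.span scale {f * \<delta> g | f g. True} = UNIV"
begin

lemma d_add[simp]: "\<delta> (x + y) = \<delta> x + \<delta> y"
  using lin by (simp add: linear_iff)
lemma d_scale[simp]: "\<delta> (scale c x) = scale c (\<delta> x)"
  using lin by (simp add: linear_iff)
lemma d_zero[simp]: "\<delta> 0 = 0"
  using d_add[of 0 0] by simp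
lemma d_neg[simp]: "\<delta> (- x) = - \<delta> x"
  using d_add[of x "-x"] by (metis add.commute add.right_neutral d_zero eq_neg_iff_add_eq_0 neg_eq_iff_add_eq_0)
lemma d_diff[simp]: "\<delta> (x - y) = \<delta> x - \<delta> y"
  using d_add[of x "-y"] by simp
lemma d_mult[simp]: "\<delta> (a * b) = a * \<delta> b + \<delta> a * b" by (rule leib)
lemma d_one[simp]: "\<delta> 1 = 0"
  using leib[of 1 1] by simp

definition Phi :: "(idx \<Rightarrow> 'z) \<Rightarrow> (idx \<Rightarrow> 'z) \<Rightarrow> (idx \<Rightarrow> 'z)" where
 "Phi z c = (\<lambda>k. case k of
   E \<Rightarrow> - (2 * z E * \<delta> (c E))
 | W1 \<Rightarrow> - (2 * z E * \<delta> (c W1)) - z W2 * c W3 + z W3 * c W2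
 | W2 \<Rightarrow> - (2 * z E * \<delta> (c W2)) - z W1 * c W3 - z W3 * c W1
 | W3 \<Rightarrow> - (2 * z E * \<delta> (c W3)) - z W1 * c W2 - z W2 * c W1
 | X \<Rightarrow> \<delta> (z E) * c X - 2 * z E * \<delta> (c X)
 | X1 \<Rightarrow> - (\<delta> (z E) * c X1) - 2 * z E * \<delta> (c X1) + \<delta> (z W1) * c X - z W2 * c X3 + z W3 * c X2
 | X2 \<Rightarrow> - (\<delta> (z E) * c X2) - 2 * z E * \<delta> (c X2) - z W1 * c X3 - \<delta> (z W2) * c X - z W3 * c X1
 | X3 \<Rightarrow> - (\<delta> (z E) * c X3) - 2 * z E * \<delta> (c X3) - z W1 * c X2 - z W2 * c X1 - \<delta> (z W3) * c X)"

definition psi0 :: "(idx \<Rightarrow> 'z) \<Rightarrow> (idx \<Rightarrow> 'z) \<Rightarrow> (idx \<Rightarrow> 'z)" where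
 "psi0 a b = (\<lambda>k. case k of
    W1 \<Rightarrow> a W2 * b W3 - a W3 * b W2
  | W2 \<Rightarrow> a W1 * b W3 - a W3 * b W1
  | W3 \<Rightarrow> a W1 * b W2 - a W2 * b W1
  | _ \<Rightarrow> 0)"

definition psi1 :: "(idx \<Rightarrow> 'z) \<Rightarrow> (idx \<Rightarrow> 'z) \<Rightarrow> (idx \<Rightarrow> 'z)" where
 "psi1 a b = (\<lambda>k. case k of
    E \<Rightarrow> a X * b X
  | W1 \<Rightarrow> a X * b X1 + a X1 * b X
  | W2 \<Rightarrow> - (a X * b X2 + a X2 * b X)
  | W3 \<Rightarrow> - (a X * b X3 + a X3 * b X)
  | _ \<Rightarrow> 0)"

lemma J0_iff: "a \<in> J0 \<longleftrightarrow> a X = 0 \<and> a X1 = 0 \<and> a X2 = 0 \<and> a X3 = 0"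
  unfolding J0_def even_idx_def
  by (auto, case_tac k, auto)
lemma J1_iff: "a \<in> J1 \<longleftrightarrow> a E = 0 \<and> a W1 = 0 \<and> a W2 = 0 \<and> a W3 = 0"
  unfolding J1_def even_idx_def by auto

lemma Dmap_even:
  assumes "a \<in> J0" "b \<in> J0"
  shows "Dmap \<delta> False False a b = Phi (psi0 a b)"
  using assms unfolding J0_iff
  apply (intro ext)
  subgoal for c k
    by (cases k) (simp_all add: Dmap_def jmult_jm jm_def Phi_def psi0_def algebra_simps)
  done

lemma Dmap_odd:
  assumes "a \<in> J1" "b \<in> J1"
  shows "Dmap \<delta> True True a b = Phi (psi1 a b)"
  using assms unfolding J1_iff
  apply (intro ext)
  subgoal for c k
    by (cases k) (simp_all add: Dmap_def jmult_jm jm_def Phi_def psi1_def algebra_simps)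
  done

end


context ck begin

lemma sc_add_r: "scale c (x + y) = scale c x + scale c y"
  using vs by (simp add: vector_space_def)
lemma sc_add_l: "scale (a + b) x = scale a x + scale b x"
  using vs by (simp add: vector_space_def)
lemma sc_assoc: "scale a (scale b x) = scale (a * b) x"
  using vs by (simp add: vector_space_def)
lemma sc_one: "scale 1 x = x"
  using vs by (simp add: vector_space_def)
lemma sc_zero[simp]: "scale c 0 = 0"
  using vector_space.scale_eq_0_iff[OF vs] by blast
lemma sc_E: "scale c x = scale c 1 * x"
  using alg[of c 1 x] by simp
lemma d_sc1[simp]: "\<delta> (scale c 1) = 0"
  using d_scale[of c 1] by simp

lemma vs_j: "vector_space (jscale scale)"
  unfolding vector_space_def jscale_def
  by (auto simp: sc_add_r sc_add_l sc_assoc sc_one fun_eq_iff)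

lemma vs_m: "vector_space (mscale scale)"
  unfolding vector_space_def mscale_def jscale_def
  by (auto simp: sc_add_r sc_add_l sc_assoc sc_one fun_eq_iff)

lemma Phi_add: "Phi (z + z') = Phi z + Phi z'"
  apply (intro ext)
  subgoal for c k by (cases k) (simp_all add: Phi_def algebra_simps)
  done

lemma Phi_scale0: "\<delta> s = 0 \<Longrightarrow> Phi (\<lambda>k. s * z k) = (\<lambda>x k. s * Phi z x k)"
  apply (intro ext)
  subgoal for x k by (cases k) (simp_all add: Phi_def algebra_simps)
  done

lemma Phi_scale: "Phi (jscale scale c z) = mscale scale c (Phi z)"
proof -
  have "jscale scale c z = (\<lambda>k. scale c 1 * z k)" unfolding jscale_def by (subst sc_E) simp
  moreover have "mscale scale c (Phi z) = (\<lambda>x k. scale c 1 * Phi z x k)"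
    unfolding mscale_def jscale_def by (subst sc_E) simp
  ultimately show ?thesis using Phi_scale0[of "scale c 1" z] by simp
qed

lemma Phi_sum: "Phi z = Dmap \<delta> True True (single X (z E)) (single X 1)
   + Dmap \<delta> False False (single W2 (z W1)) (single W3 1)
   + Dmap \<delta> False False (single W1 (z W2)) (single W3 1)
   + Dmap \<delta> False False (single W1 (z W3)) (single W2 1)"
  apply (intro ext)
  subgoal for c k
    by (cases k) (simp_all add: Dmap_def jmult_jm jm_def Phi_def single_def algebra_simps)
  done

end


context ck begin

interpretation Zs: vector_space scale by (rule vs)

lemma two_tf: assumes "2 * (w::'z) = 0" shows "w = 0"
proof -
  have "scale 2 w = 2 * w"
    by (metis mult_2 one_add_one sc_add_l sc_one)
  with assms have "scale 2 w = 0" by simp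
  with char show ?thesis by simp
qed

lemma ann: assumes "\<And>h. u * \<delta> h = 0" shows "u = 0"
proof -
  have "Zs.span {f * \<delta> g | f g. True} \<subseteq> {w. u * w = 0}"
  proof (rule Zs.span_minimal)
    show "{f * \<delta> g | f g. True} \<subseteq> {w. u * w = 0}"
      using assms by (auto simp: algebra_simps)
    show "Zs.subspace {w. u * w = 0}"
      unfolding Zs.subspace_def
    proof (intro conjI ballI allI)
      fix c x assume "x \<in> {w. u * w = 0}"
      then have "u * x = 0" by simp
      have "u * scale c x = scale c 1 * (u * x)" by (subst sc_E) (simp add: algebra_simps)
      then show "scale c x \<in> {w. u * w = 0}" using \<open>u * x = 0\<close> by simp
    qed (auto simp: algebra_simps)
  qed
  with gen have "1 \<in> {w. u * w = 0}" by blast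
  then show ?thesis by simp
qed

lemma Phi_inj0: assumes "z \<in> J0" "Phi z = 0" shows "z = 0"
proof -
  have e: "Phi z c k = 0" for c k using assms(2) by simp
  have 3: "z W3 = 0" using e[of "single W2 1" W1] by (simp add: Phi_def single_def)
  have 2: "z W2 = 0" using e[of "single W1 1" W3] by (simp add: Phi_def single_def)
  have 1: "z W1 = 0" using e[of "single W2 1" W3] by (simp add: Phi_def single_def)
  have "2 * (z E * \<delta> h) = 0" for h using e[of "single E h" E] by (simp add: Phi_def single_def algebra_simps)
  then have "z E * \<delta> h = 0" for h using two_tf by blast
  then have 0: "z E = 0" by (rule ann)
  show ?thesis using 0 1 2 3 assms(1) unfolding J0_iff
    by (intro ext) (case_tac x, auto)
qed

lemma Phi_J0: "c \<in> J0 \<Longrightarrow> Phi z c \<in> J0"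
  by (simp add: J0_iff Phi_def)
lemma Phi_J1: "c \<in> J1 \<Longrightarrow> Phi z c \<in> J1"
  by (simp add: J1_iff Phi_def)

lemma jm_00: "a \<in> J0 \<Longrightarrow> b \<in> J0 \<Longrightarrow> jm \<delta> a b \<in> J0"
  by (simp add: J0_iff jm_def)
lemma jm_11: "a \<in> J1 \<Longrightarrow> b \<in> J1 \<Longrightarrow> jm \<delta> a b \<in> J0"
  by (simp add: J0_iff J1_iff jm_def)
lemma jm_01: "a \<in> J0 \<Longrightarrow> b \<in> J1 \<Longrightarrow> jm \<delta> a b \<in> J1"
  by (simp add: J0_iff J1_iff jm_def)
lemma jm_10: "a \<in> J1 \<Longrightarrow> b \<in> J0 \<Longrightarrow> jm \<delta> a b \<in> J1"
  by (simp add: J0_iff J1_iff jm_def)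

lemma jm_add: "jm \<delta> a (b + b') = jm \<delta> a b + jm \<delta> a b'"
  apply (intro ext)
  subgoal for k by (cases k) (simp_all add: jm_def algebra_simps)
  done

definition Od :: "((idx \<Rightarrow> 'z) \<Rightarrow> (idx \<Rightarrow> 'z)) set" where
  "Od = {\<phi>. (\<forall>c c'. \<phi> (c + c') = \<phi> c + \<phi> c') \<and> (\<forall>c\<in>J0. \<phi> c \<in> J1) \<and> (\<forall>c\<in>J1. \<phi> c \<in> J0)}"

lemma Dmap_alt: "Dmap \<delta> p q a b c = (\<lambda>k. jm \<delta> a (jm \<delta> b c) k - (if p \<and> q then -1 else 1) * jm \<delta> b (jm \<delta> a c) k)"
  by (simp add: Dmap_def jmult_jm)

lemma Dmap_Od:
  assumes "hom p a" "hom q b" "p \<noteq> q"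
  shows "Dmap \<delta> p q a b \<in> Od"
proof -
  have addi: "Dmap \<delta> p q a b (c + c') = Dmap \<delta> p q a b c + Dmap \<delta> p q a b c'" for c c'
    by (simp add: Dmap_alt jm_add fun_eq_iff algebra_simps)
  have ab: "(a \<in> J0 \<and> b \<in> J1) \<or> (a \<in> J1 \<and> b \<in> J0)"
    using assms by (cases p; cases q) (auto simp: hom_def)
  have s: "\<not> (p \<and> q)" using assms(3) by auto
  have A: "c \<in> J0 \<Longrightarrow> Dmap \<delta> p q a b c \<in> J1" for c
  proof -
    assume c: "c \<in> J0"
    from ab show ?thesis
    proof
      assume h: "a \<in> J0 \<and> b \<in> J1"
      have "jm \<delta> a (jm \<delta> b c) \<in> J1" "jm \<delta> b (jm \<delta> a c) \<in> J1"
        using h c by (simp_all add: jm_00 jm_01 jm_10 jm_11)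
      then show ?thesis using s by (simp add: Dmap_alt J1_iff)
    next
      assume h: "a \<in> J1 \<and> b \<in> J0"
      have "jm \<delta> a (jm \<delta> b c) \<in> J1" "jm \<delta> b (jm \<delta> a c) \<in> J1"
        using h c by (simp_all add: jm_00 jm_01 jm_10 jm_11)
      then show ?thesis using s by (simp add: Dmap_alt J1_iff)
    qed
  qed
  have B: "c \<in> J1 \<Longrightarrow> Dmap \<delta> p q a b c \<in> J0" for c
  proof -
    assume c: "c \<in> J1"
    from ab show ?thesis
    proof
      assume h: "a \<in> J0 \<and> b \<in> J1"
      have "jm \<delta> a (jm \<delta> b c) \<in> J0" "jm \<delta> b (jm \<delta> a c) \<in> J0"
        using h c by (simp_all add: jm_00 jm_01 jm_10 jm_11)
      then show ?thesis using s by (simp add: Dmap_alt J0_iff)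
    next
      assume h: "a \<in> J1 \<and> b \<in> J0"
      have "jm \<delta> a (jm \<delta> b c) \<in> J0" "jm \<delta> b (jm \<delta> a c) \<in> J0"
        using h c by (simp_all add: jm_00 jm_01 jm_10 jm_11)
      then show ?thesis using s by (simp add: Dmap_alt J0_iff)
    qed
  qed
  show ?thesis unfolding Od_def using addi A B by blast
qed

end


lemma sum_fun_app: "finite t \<Longrightarrow> (sum f t) k = (\<Sum>v\<in>t. f v k)"
  by (induct rule: finite_induct) auto

lemma J01: "x \<in> J0 \<Longrightarrow> x \<in> J1 \<Longrightarrow> x = 0"
  unfolding J0_def J1_def by (auto simp: fun_eq_iff)

context ck begin

interpretation Zs: vector_space scale by (rule vs)
interpretation Js: vector_space "jscale scale" by (rule vs_j)
interpretation Ms: vector_space "mscale scale" by (rule vs_m)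

lemma Phi_hom: "module_hom (jscale scale) (mscale scale) Phi"
  by (simp add: module_hom_iff_linear linear_iff vs_j vs_m Phi_add Phi_scale)

interpretation Ph: module_hom "jscale scale" "mscale scale" Phi by (rule Phi_hom)

lemma J0_sub: "Js.subspace J0"
  unfolding Js.subspace_def by (auto simp: J0_iff jscale_def)

lemma Od_sub: "Ms.subspace Od"
  unfolding Ms.subspace_def Od_def
  by (auto simp: J0_iff J1_iff jscale_def mscale_def sc_add_r)

lemma Phi_inj: "inj_on Phi J0"
proof (rule inj_onI)
  fix x y assume xy: "x \<in> J0" "y \<in> J0" "Phi x = Phi y"
  have "Phi (x - y) = 0" using xy(3) by (simp add: Ph.diff)
  moreover have "x - y \<in> J0" using xy(1,2) by (simp add: J0_iff)
  ultimately have "x - y = 0" using Phi_inj0 by blast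
  then show "x = y" by simp
qed

lemma o_zero:
  fixes om :: "(idx \<Rightarrow> 'z) \<Rightarrow> idx \<Rightarrow> 'z"
  assumes om: "om \<in> Od" and g0: "\<And>c. c \<in> J0 \<Longrightarrow> (Phi z + om) c \<in> J0"
    and g1: "\<And>c. c \<in> J1 \<Longrightarrow> (Phi z + om) c \<in> J1"
  shows "om = 0"
proof (rule ext)
  fix c
  define c0 :: "idx \<Rightarrow> 'z" where "c0 = (\<lambda>k. if even_idx k then c k else 0)"
  define c1 :: "idx \<Rightarrow> 'z" where "c1 = (\<lambda>k. if even_idx k then 0 else c k)"
  have c0: "c0 \<in> J0" by (simp add: c0_def J0_def)
  have c1: "c1 \<in> J1" by (simp add: c1_def J1_def)
  have c: "c = c0 + c1" by (simp add: c0_def c1_def fun_eq_iff)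
  have oa: "om (c0 + c1) = om c0 + om c1" using om by (simp add: Od_def)
  have "om c0 = (Phi z + om) c0 - Phi z c0" by simp
  moreover have "(Phi z + om) c0 \<in> J0" "Phi z c0 \<in> J0" using g0 c0 Phi_J0 by auto
  ultimately have "om c0 \<in> J0" by (simp add: J0_iff)
  moreover have "om c0 \<in> J1" using om c0 by (simp add: Od_def)
  ultimately have z0: "om c0 = 0" by (rule J01)
  have "om c1 = (Phi z + om) c1 - Phi z c1" by simp
  moreover have "(Phi z + om) c1 \<in> J1" "Phi z c1 \<in> J1" using g1 c1 Phi_J1 by auto
  ultimately have "om c1 \<in> J1" by (simp add: J1_iff)
  moreover have "om c1 \<in> J0" using om c1 by (simp add: Od_def)
  ultimately have z1: "om c1 = 0" using J01 by blast
  show "om c = 0 c" using c oa z0 z1 by simp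
qed

lemma Inder0_eq: "Inder0 scale \<delta> = Phi ` J0"
proof
  let ?G = "{Dmap \<delta> p q a b | p q a b. hom p a \<and> hom q b}"
  have IG: "Inder scale \<delta> = Ms.span ?G" by (simp add: Inder_def)
  show "Phi ` J0 \<subseteq> Inder0 scale \<delta>"
  proof
    fix \<phi> assume "\<phi> \<in> Phi ` J0"
    then obtain z where z: "z \<in> J0" "\<phi> = Phi z" by auto
    have hs: "hom True (single X u)" "hom False (single W1 u)" "hom False (single W2 u)" "hom False (single W3 u)" for u :: 'z
      by (auto simp: hom_def J0_iff J1_iff single_def)
    have inG: "Dmap \<delta> True True (single X (z E)) (single X 1) \<in> ?G"
        "Dmap \<delta> False False (single W2 (z W1)) (single W3 1) \<in> ?G"
        "Dmap \<delta> False False (single W1 (z W2)) (single W3 1) \<in> ?G"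
        "Dmap \<delta> False False (single W1 (z W3)) (single W2 1) \<in> ?G"
      using hs by blast+
    have "Phi z \<in> Ms.span ?G"
      unfolding Phi_sum
      by (intro Ms.span_add Ms.span_base inG)
    moreover have "Phi z ` J0 \<subseteq> J0" "Phi z ` J1 \<subseteq> J1" using Phi_J0 Phi_J1 by auto
    ultimately show "\<phi> \<in> Inder0 scale \<delta>" using z IG by (simp add: Inder0_def)
  qed
  show "Inder0 scale \<delta> \<subseteq> Phi ` J0"
  proof
    fix \<phi> assume "\<phi> \<in> Inder0 scale \<delta>"
    then have \<phi>: "\<phi> \<in> Ms.span ?G" "\<phi> ` J0 \<subseteq> J0" "\<phi> ` J1 \<subseteq> J1"
      by (auto simp: Inder0_def IG)
    have "?G \<subseteq> Phi ` J0 \<union> Od"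
    proof
      fix g assume "g \<in> ?G"
      then obtain p q a b where g: "g = Dmap \<delta> p q a b" "hom p a" "hom q b" by blast
      show "g \<in> Phi ` J0 \<union> Od"
      proof (cases "p = q")
        case True
        show ?thesis
        proof (cases p)
          case True
          with \<open>p = q\<close> g have "a \<in> J1" "b \<in> J1" by (auto simp: hom_def)
          then have "g = Phi (psi1 a b)" using g True \<open>p = q\<close> Dmap_odd by simp
          moreover have "psi1 a b \<in> J0" by (simp add: J0_iff psi1_def)
          ultimately show ?thesis by blast
        next
          case False
          with \<open>p = q\<close> g have "a \<in> J0" "b \<in> J0" by (auto simp: hom_def)
          then have "g = Phi (psi0 a b)" using g False \<open>p = q\<close> Dmap_even by simp
          moreover have "psi0 a b \<in> J0" by (simp add: J0_iff psi0_def)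
          ultimately show ?thesis by blast
        qed
      next
        case False
        then show ?thesis using g Dmap_Od by blast
      qed
    qed
    then have "Ms.span ?G \<subseteq> Ms.span (Phi ` J0 \<union> Od)" by (rule Ms.span_mono)
    also have "\<dots> = {x + y | x y. x \<in> Phi ` J0 \<and> y \<in> Od}"
      using Ms.span_Un[of "Phi ` J0" Od] Ph.subspace_image[OF J0_sub] Od_sub
      by (simp add: Ms.span_eq_iff[THEN iffD2])
    finally obtain x om where xo: "\<phi> = x + om" "x \<in> Phi ` J0" "om \<in> Od" using \<phi>(1) by blast
    then obtain z where z: "z \<in> J0" "x = Phi z" by auto
    have "om = 0"
      by (rule o_zero[of om z]) (use xo z \<phi>(2,3) in auto)
    then show "\<phi> \<in> Phi ` J0" using xo by simp
  qed
qed

end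


definition ev :: "nat \<Rightarrow> idx" where "ev i = [E, W1, W2, W3] ! i"

lemma ev_inj: "i < 4 \<Longrightarrow> j < 4 \<Longrightarrow> ev i = ev j \<Longrightarrow> i = j"
  by (auto simp: ev_def less_Suc_eq numeral_eq_Suc)

lemma ev_even: "i < 4 \<Longrightarrow> even_idx (ev i)"
  by (auto simp: ev_def less_Suc_eq numeral_eq_Suc even_idx_def)

lemma ev_vals: "ev 0 = E" "ev 1 = W1" "ev 2 = W2" "ev 3 = W3"
  by (simp_all add: ev_def numeral_eq_Suc)

lemma single_inj: "inj (single k)"
  by (rule injI) (metis single_def)

lemma single_app: "single k c k = c" "k' \<noteq> k \<Longrightarrow> single k c k' = 0"
  by (simp_all add: single_def)

context ck begin

interpretation Zs: vector_space scale by (rule vs)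
interpretation Js: vector_space "jscale scale" by (rule vs_j)
interpretation Ms: vector_space "mscale scale" by (rule vs_m)
interpretation Ph: module_hom "jscale scale" "mscale scale" Phi by (rule Phi_hom)

lemma single_hom: "module_hom scale (jscale scale) (single k)"
  by (simp add: module_hom_iff_linear linear_iff vs vs_j single_def jscale_def fun_eq_iff sc_add_r)

lemma basis_J0:
  assumes C: "basis_of scale UNIV C"
  defines "D1 \<equiv> (\<lambda>(i, c). single (ev i) c) ` ({..<4::nat} \<times> C)"
  shows "basis_of (jscale scale) J0 D1 \<and> D1 \<approx> {..<4::nat} \<times> C"
proof -
  have Cind: "Zs.independent C" and Cspan: "Zs.span C = UNIV" using C by (auto simp: basis_of_def)
  have C0: "0 \<notin> C" using Cind Zs.dependent_zero by blast
  have inj: "inj_on (\<lambda>(i, c). single (ev i) c) ({..<4::nat} \<times> C)"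
  proof (rule inj_onI)
    fix x y assume hx: "x \<in> {..<4::nat} \<times> C" and hy: "y \<in> {..<4::nat} \<times> C"
      and e: "(\<lambda>(i, c). single (ev i) c) x = (\<lambda>(i, c). single (ev i) c) y"
    obtain i c where x: "x = (i, c)" by (cases x)
    obtain j c' where y: "y = (j, c')" by (cases y)
    have h: "i < 4" "c \<in> C" "j < 4" "c' \<in> C" "single (ev i) c = single (ev j) c'"
      using hx hy e x y by auto
    have "c = single (ev j) c' (ev i)" using h(5) single_app(1)[of "ev i" c] by simp
    then have "ev i = ev j" using C0 h(2) by (auto simp: single_def split: if_splits)
    then have ij: "i = j" using ev_inj h(1,3) by auto
    then have "c = c'" using h(5) single_inj by (auto dest: injD)
    then show "x = y" using ij x y by simp
  qed
  have D1J0: "D1 \<subseteq> J0" unfolding D1_def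
    by (auto simp: J0_def single_def dest: ev_even)
  have span1: "Js.span D1 \<subseteq> J0" using Js.span_minimal[OF D1J0 J0_sub] .
  have sub_k: "single (ev i) ` C \<subseteq> D1" if "i < 4" for i using that unfolding D1_def by force
  have sk: "single (ev i) u \<in> Js.span D1" if "i < 4" for i u
  proof -
    interpret Sk: module_hom scale "jscale scale" "single (ev i)" by (rule single_hom)
    have "single (ev i) u \<in> single (ev i) ` Zs.span C" using Cspan by simp
    also have "\<dots> = Js.span (single (ev i) ` C)" by (rule Sk.span_image[symmetric])
    also have "\<dots> \<subseteq> Js.span D1" by (rule Js.span_mono[OF sub_k[OF that]])
    finally show ?thesis .
  qed
  have span2: "J0 \<subseteq> Js.span D1"
  proof
    fix a :: "idx \<Rightarrow> 'z" assume a: "a \<in> J0"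
    have "a = single E (a E) + single W1 (a W1) + single W2 (a W2) + single W3 (a W3)"
      using a unfolding J0_iff single_def fun_eq_iff by (intro allI, case_tac x) auto
    also have "\<dots> \<in> Js.span D1"
      using sk[of 0 "a E"] sk[of 1 "a W1"] sk[of 2 "a W2"] sk[of 3 "a W3"]
      by (intro Js.span_add) (simp_all add: ev_def numeral_eq_Suc)
    finally show "a \<in> Js.span D1" .
  qed
  have ind: "Js.independent D1"
    unfolding Js.independent_explicit_module
  proof (intro allI impI)
    fix t u v assume t: "finite t" "t \<subseteq> D1" "(\<Sum>v\<in>t. jscale scale (u v) v) = 0" "v \<in> t"
    obtain i c0 where v: "i < 4" "c0 \<in> C" "v = single (ev i) c0" using t(2,4) unfolding D1_def by auto
    define k where "k = ev i"
    define T where "T = {c \<in> C. single k c \<in> t}"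
    have Tfin: "finite T" unfolding T_def
      by (rule finite_subset[OF _ finite_vimageI[OF t(1) single_inj[of k]]]) auto
    have "0 = (\<Sum>w\<in>t. jscale scale (u w) w) k" using t(3) by simp
    also have "\<dots> = (\<Sum>w\<in>t. scale (u w) (w k))" using t(1) by (simp add: sum_fun_app jscale_def)
    also have "\<dots> = (\<Sum>w\<in>single k ` T. scale (u w) (w k))"
    proof (rule sum.mono_neutral_right[OF t(1)])
      show "single k ` T \<subseteq> t" by (auto simp: T_def)
      show "\<forall>w\<in>t - single k ` T. scale (u w) (w k) = 0"
      proof
        fix w assume w: "w \<in> t - single k ` T"
        then obtain j c where j: "j < 4" "c \<in> C" "w = single (ev j) c" using t(2) unfolding D1_def by auto
        have "ev j \<noteq> k" using w j by (auto simp: T_def)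
        then show "scale (u w) (w k) = 0" using j by (simp add: single_def)
      qed
    qed
    also have "\<dots> = (\<Sum>c\<in>T. scale (u (single k c)) c)"
      by (subst sum.reindex) (auto intro: inj_on_subset[OF single_inj] simp: single_def)
    finally have "(\<Sum>c\<in>T. scale (u (single k c)) c) = 0" by simp
    moreover have "c0 \<in> T" using v t(4) by (simp add: T_def k_def)
    moreover have "T \<subseteq> C" by (auto simp: T_def)
    moreover have I: "\<And>t u v. finite t \<Longrightarrow> t \<subseteq> C \<Longrightarrow> (\<Sum>v\<in>t. scale (u v) v) = 0 \<Longrightarrow> v \<in> t \<Longrightarrow> u v = 0"
      using Cind unfolding Zs.independent_explicit_module by blast
    ultimately have "u (single k c0) = 0"
      using I[of T "\<lambda>c. u (single k c)" c0] Tfin by simp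
    then show "u v = 0" using v by (simp add: k_def)
  qed
  have "basis_of (jscale scale) J0 D1"
    unfolding basis_of_def using ind span1 span2 by auto
  moreover have "D1 \<approx> {..<4::nat} \<times> C"
    unfolding D1_def by (rule inj_on_image_eqpoll_self[OF inj])
  ultimately show ?thesis by blast
qed

lemma main:
  shows "(\<forall>B C. basis_of (mscale scale) (Inder0 scale \<delta>) B \<and> basis_of scale UNIV C
            \<longrightarrow> B \<approx> {..<4::nat} \<times> C)
       \<and> (\<forall>D C. basis_of (jscale scale) J0 D \<and> basis_of scale UNIV C
            \<longrightarrow> D \<approx> {..<4::nat} \<times> C)"
proof (intro conjI allI impI; elim conjE)
  fix D C assume D: "basis_of (jscale scale) J0 D" and C: "basis_of scale UNIV C"
  obtain D1 where D1: "basis_of (jscale scale) J0 D1" "D1 \<approx> {..<4::nat} \<times> C"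
    using basis_J0[OF C] by blast
  have "\<exists>f. bij_betw f D D1"
    using D D1(1) by (intro Js.bij_if_span_eq_span_bases) (auto simp: basis_of_def)
  then have "D \<approx> D1" by (simp add: eqpoll_def)
  then show "D \<approx> {..<4::nat} \<times> C" using D1(2) by (rule eqpoll_trans)
next
  fix B C assume B: "basis_of (mscale scale) (Inder0 scale \<delta>) B" and C: "basis_of scale UNIV C"
  obtain D1 where D1: "basis_of (jscale scale) J0 D1" "D1 \<approx> {..<4::nat} \<times> C"
    using basis_J0[OF C] by blast
  have D1i: "Js.independent D1" and D1s: "Js.span D1 = J0" using D1(1) by (auto simp: basis_of_def)
  have D1J0: "D1 \<subseteq> J0" using D1s Js.span_superset by blast
  have i2: "Ms.independent (Phi ` D1)"
    by (rule Ph.independent_injective_image[OF D1i]) (simp add: D1s Phi_inj)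
  have s2: "Ms.span (Phi ` D1) = Inder0 scale \<delta>"
    by (simp add: Ph.span_image D1s Inder0_eq)
  have "\<exists>f. bij_betw f B (Phi ` D1)"
    using B i2 s2 by (intro Ms.bij_if_span_eq_span_bases) (auto simp: basis_of_def)
  then have "B \<approx> Phi ` D1" by (simp add: eqpoll_def)
  also have "Phi ` D1 \<approx> D1" by (rule inj_on_image_eqpoll_self[OF inj_on_subset[OF Phi_inj D1J0]])
  also note D1(2)
  finally show "B \<approx> {..<4::nat} \<times> C" .
qed

end

theorem corollary4p2:
  fixes scale :: "'f::field \<Rightarrow> 'z::comm_ring_1 \<Rightarrow> 'z" and \<delta> :: "'z \<Rightarrow> 'z"
  assumes char: "(2::'f) \<noteq> 0"
    and vs: "vector_space scale"
    and alg: "\<And>c a b. scale c (a * b) = scale c a * b"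
    and lin: "Vector_Spaces.linear scale scale \<delta>"
    and leib: "\<And>a b. \<delta> (a * b) = a * \<delta> b + \<delta> a * b"
    and gen: "module.span scale {f * \<delta> g | f g. True} = UNIV"
  shows "(\<forall>B C. basis_of (mscale scale) (Inder0 scale \<delta>) B \<and> basis_of scale UNIV C
            \<longrightarrow> B \<approx> {..<4::nat} \<times> C)
       \<and> (\<forall>D C. basis_of (jscale scale) J0 D \<and> basis_of scale UNIV C
            \<longrightarrow> D \<approx> {..<4::nat} \<times> C)"
proof -
  interpret ck scale \<delta> using assms by (simp add: ck_def)
  show ?thesis by (rule main)
qed

end
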